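(* Let $U$ be a Banach space and $(u_n)_{n\ge1}$ a convergent sequence in $U$. Let $A_1,A_2,\ldots\in\mathcal{L}(U)$ be bounded linear operators such that there exists $c<1$ with $\|A_nu\|\le c\|u\|$ for all $u\in U$ and all $n\ge1$, and such that for every $u\in U$ the sequence $(A_nu)_{n\ge1}$ converges in $U$. Let $(v_n)_{n\ge1}\subset U$ satisfy $v_{n+1}=A_nv_n+u_n$ for all $n\ge1$. Then $(v_n)_{n\ge1}$ converges in $U$. *)

theory Defs
  imports "HOL-Analysis.Analysis"
begin

end

theory Submission
  imports Defs
begin

lemma aux_real:
  fixes a e :: "nat \<Rightarrow> real"
  assumes c0: "0 \<le> c" and c1: "c < 1" and a0: "\<And>n. 0 \<le> a n"
    and step: "\<And>n. a (Suc n) \<le> c * a n + e n" and e0: "e \<longlonglongrightarrow> 0"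
  shows "a \<longlonglongrightarrow> 0"
proof (rule LIMSEQ_I)
  fix r :: real assume r: "0 < r"
  define \<epsilon> where "\<epsilon> = r / 2"
  have ep: "0 < \<epsilon>" using r by (simp add: \<epsilon>_def)
  have "0 < \<epsilon> * (1 - c)" using ep c1 by simp
  then obtain N where N: "\<And>n. n \<ge> N \<Longrightarrow> norm (e n - 0) < \<epsilon> * (1 - c)"
    using LIMSEQ_D[OF e0] by blast
  have bnd: "a (N + k) \<le> c ^ k * a N + \<epsilon>" for k
  proof (induction k)
    case 0 then show ?case using ep by simp
  next
    case (Suc k)
    have "a (N + Suc k) \<le> c * a (N + k) + e (N + k)" using step[of "N+k"] by simp
    also have "\<dots> \<le> c * (c ^ k * a N + \<epsilon>) + \<epsilon> * (1 - c)"
      using mult_left_mono[OF Suc.IH c0] N[of "N+k"] by auto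
    also have "\<dots> = c ^ Suc k * a N + \<epsilon>" by (simp add: algebra_simps)
    finally show ?case .
  qed
  have "(\<lambda>k. c ^ k * a N) \<longlonglongrightarrow> 0 * a N"
    by (intro tendsto_mult tendsto_const LIMSEQ_power_zero) (use c0 c1 in auto)
  then have lim0: "(\<lambda>k. c ^ k * a N) \<longlonglongrightarrow> 0" by simp
  have "\<exists>M. \<forall>k\<ge>M. norm (c ^ k * a N - 0) < \<epsilon>" by (rule LIMSEQ_D[OF lim0 ep])
  then obtain M where M: "\<forall>k\<ge>M. norm (c ^ k * a N - 0) < \<epsilon>" ..
  show "\<exists>no. \<forall>n\<ge>no. norm (a n - 0) < r"
  proof (rule exI[of _ "N + M"], intro allI impI)
    fix n assume "N + M \<le> n"
    define k where "k = n - N"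
    have k: "n = N + k" "k \<ge> M" using \<open>N + M \<le> n\<close> unfolding k_def by arith+
    have "a n \<le> c ^ k * a N + \<epsilon>" using bnd k by simp
    moreover have "c ^ k * a N < \<epsilon>" using M k(2) by fastforce
    ultimately show "norm (a n - 0) < r" using a0[of n] by (simp add: \<epsilon>_def)
  qed
qed

lemma tri3: "norm (x + y + z) \<le> norm x + (norm y + norm (z::'a::real_normed_vector))"
proof -
  have "norm (x + y + z) \<le> norm (x + y) + norm z" by (rule norm_triangle_ineq)
  moreover have "norm (x + y) \<le> norm x + norm y" by (rule norm_triangle_ineq)
  ultimately show ?thesis by linarith
qed

theorem lemmaA1:
  fixes u v :: "nat \<Rightarrow> 'a::banach"
    and A :: "nat \<Rightarrow> 'a \<Rightarrow> 'a"
  assumes u_conv: "convergent (\<lambda>n. u (n + 1))"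
    and A_lin: "\<And>n. n \<ge> 1 \<Longrightarrow> bounded_linear (A n)"
    and A_contr: "\<exists>c < 1. \<forall>n \<ge> 1. \<forall>x. norm (A n x) \<le> c * norm x"
    and A_conv: "\<And>x. convergent (\<lambda>n. A (n + 1) x)"
    and rec: "\<And>n. n \<ge> 1 \<Longrightarrow> v (n + 1) = A n (v n) + u n"
  shows "convergent (\<lambda>n. v (n + 1))"
proof -
  obtain c0 where c0: "c0 < 1" "\<forall>n \<ge> 1. \<forall>x. norm (A n x) \<le> c0 * norm x"
    using A_contr by blast
  define c where "c = max c0 0"
  have c: "0 \<le> c" "c < 1" using c0 by (auto simp: c_def)
  have Ac: "norm (A n x) \<le> c * norm x" if "n \<ge> 1" for n x
  proof -
    have "c0 * norm x \<le> c * norm x" by (intro mult_right_mono) (auto simp: c_def)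
    then show ?thesis using c0(2) that by (meson order_trans)
  qed
  define B where "B x = lim (\<lambda>n. A (n + 1) x)" for x
  have BT: "(\<lambda>n. A (n + 1) x) \<longlonglongrightarrow> B x" for x
    using A_conv[of x] by (simp add: B_def convergent_LIMSEQ_iff)
  obtain U where UT: "(\<lambda>n. u (n + 1)) \<longlonglongrightarrow> U" using u_conv convergent_def by blast
  have lin: "bounded_linear (A (n + 1))" for n using A_lin by simp
  have Bdiff: "B x - B y = B (x - y)" for x y
  proof -
    have "(\<lambda>n. A (n + 1) x - A (n + 1) y) \<longlonglongrightarrow> B x - B y" by (intro tendsto_diff BT)
    moreover have "(\<lambda>n. A (n + 1) x - A (n + 1) y) = (\<lambda>n. A (n + 1) (x - y))"
      using lin by (simp add: linear_simps)
    ultimately show ?thesis using BT[of "x - y"] LIMSEQ_unique by metis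
  qed
  have Bc: "norm (B x) \<le> c * norm x" for x
  proof (rule tendsto_le[OF trivial_limit_sequentially])
    show "(\<lambda>n. norm (A (n + 1) x)) \<longlonglongrightarrow> norm (B x)" by (intro tendsto_norm BT)
    show "(\<lambda>n. c * norm x) \<longlonglongrightarrow> c * norm x" by simp
    show "\<forall>\<^sub>F n in sequentially. norm (A (n + 1) x) \<le> c * norm x" using Ac by simp
  qed
  define f where "f x = B x + U" for x
  have "\<exists>!p. f p = p"
    by (rule banach_fix_type[OF c]) (use Bc in \<open>simp add: f_def dist_norm Bdiff\<close>)
  then obtain p where p: "B p + U = p" by (auto simp: f_def)
  define a where "a n = norm (v (n + 1) - p)" for n
  define e where "e n = norm (A (n + 1) p - B p) + norm (u (n + 1) - U)" for n
  have e0: "e \<longlonglongrightarrow> 0"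
  proof -
    have "(\<lambda>n. norm (A (n + 1) p - B p) + norm (u (n + 1) - U)) \<longlonglongrightarrow> norm (B p - B p) + norm (U - U)"
      by (intro tendsto_add tendsto_norm tendsto_diff BT UT tendsto_const)
    then show ?thesis unfolding e_def by simp
  qed
  have step: "a (Suc n) \<le> c * a n + e n" for n
  proof -
    have "v (Suc n + 1) = A (n + 1) (v (n + 1)) + u (n + 1)" using rec[of "n + 1"] by simp
    then have "v (Suc n + 1) - p = A (n + 1) (v (n + 1) - p) + (A (n + 1) p - B p) + (u (n + 1) - U)"
    proof -
      have d: "A (n + 1) (v (n + 1) - p) = A (n + 1) (v (n + 1)) - A (n + 1) p"
        using lin[of n] by (simp add: linear_simps)
      have "v (Suc n + 1) - p = A (n + 1) (v (n + 1)) + u (n + 1) - (B p + U)"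
        using \<open>v (Suc n + 1) = _\<close> p by simp
      then show ?thesis unfolding d by (simp add: algebra_simps)
    qed
    then have "a (Suc n) \<le> norm (A (n + 1) (v (n + 1) - p)) + e n"
      unfolding a_def e_def using tri3 by (simp add: add.assoc)
    also have "\<dots> \<le> c * a n + e n" using Ac[of "n+1" "v (n + 1) - p"] by (simp add: a_def)
    finally show ?thesis .
  qed
  have "a \<longlonglongrightarrow> 0" by (rule aux_real[OF c _ step e0]) (simp add: a_def)
  then have "(\<lambda>n. v (n + 1) - p) \<longlonglongrightarrow> 0" unfolding a_def by (simp only: tendsto_norm_zero_iff)
  then have "(\<lambda>n. v (n + 1)) \<longlonglongrightarrow> p" by (rule LIM_zero_cancel)
  then show ?thesis unfolding convergent_def by blast
qed

end
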